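(* Let $s\ge 2$, $q=s-1$, and let $c_1,\dots,c_s$ be pairwise distinct real nodes. Let $A,K\in\mathbb{R}^{s\times s}$ and let $B(\sigma)\in\mathbb{R}^{s\times s}$ be given for all $\sigma$ in a set $\Sigma\subset(0,\infty)$ with $1\in\Sigma$, such that for all $\sigma\in\Sigma$ the standard-method order conditions $$AV_q-KV_q\tilde E_q=B(\sigma)V_q\mathcal{P}_q^{-1}S_q(\sigma)^{-1},\qquad A^{\mathsf T}V_q+KV_q\tilde E_q=B(\sigma)^{\mathsf T}V_qS_q(\sigma)\mathcal{P}_q$$ hold, and assume moreover $\mathcal{Q}_{q,q}(1)=e_1e_1^{\mathsf T}\in\mathbb{R}^{q\times q}$. Let $A_0,A_N\in\mathbb{R}^{s\times s}$, $a,w\in\mathbb{R}^s$ and $\sigma_1,\sigma_N\in\Sigma$ be such that $$A_0V_q=a\,e_1^{\mathsf T}+KV_q\tilde E_q,\qquad A_0^{\mathsf T}V_q+KV_q\tilde E_q=B(\sigma_1)^{\mathsf T}V_qS_q(\sigma_1)\mathcal{P}_q,$$ $$A_NV_q-KV_q\tilde E_q=B(\sigma_N)V_q\mathcal{P}_q^{-1}S_q(\sigma_N)^{-1},\qquad A_N^{\mathsf T}V_q+KV_q\tilde E_q=w\,\mathbb{1}_q^{\mathsf T}.$$ Then $a=A_0\mathbb{1}_s$, $w=A_N^{\mathsf T}\mathbb{1}_s$, and there exist vectors $\phi_0,\phi_N\in\mathbb{R}^s$ such that $$A_0=A+V_s^{-\mathsf T}e_s\,\phi_0^{\mathsf T}V_s^{-1},\qquad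 A_N=A+\phi_N\,e_s^{\mathsf T}V_s^{-1},$$ and, for $j=2,\dots,q$, $$e_j^{\mathsf T}\phi_0=-e_s^{\mathsf T}\mathcal{Q}_{s,q}(1)e_j,\qquad \phi_N^{\mathsf T}V_q\mathcal{P}_q^{-1}e_j=-\hat b_{js}(1),$$ where $\hat b_{js}(1)$ denotes the $(j,s)$ entry of $\hat B(1)=V_s^{\mathsf T}B(1)V_s$.
   Context: Notation: $e_i$ is the $i$-th cardinal basis vector (of the dimension dictated by context), $\mathbb{1}_k=(1,\dots,1)^{\mathsf T}\in\mathbb{R}^k$. For the nodes $\mathbf{c}=(c_1,\dots,c_s)^{\mathsf T}$, $\mathbf{c}^k=(c_1^k,\dots,c_s^k)^{\mathsf T}$, and for $r\le s$ the Vandermonde matrix is $V_r=(\mathbb{1},\mathbf{c},\dots,\mathbf{c}^{r-1})\in\mathbb{R}^{s\times r}$. The Pascal matrix is $\mathcal{P}_r=\big(\binom{j-1}{i-1}\big)_{i,j=1}^r$, the scaled shift matrix is $\tilde E_r=(i\,\delta_{i+1,j})_{i,j=1}^r$, and $S_r(\sigma)=\mathrm{diag}(1,\sigma,\dots,\sigma^{r-1})$. For $r,r'\le s$, $\mathcal{Q}_{r,r'}(\sigma):=V_r^{\mathsf T}B(\sigma)V_{r'}\mathcal{P}_{r'}^{-1}\in\mathbb{R}^{r\times r'}$. These are the order conditions of order $q$ for a Peer two-step method $A Y_n=B(\sigma_n)Y_{n-1}+h_nKF(Y_n)$ with stepsize ratio $\sigma_n=h_n/h_{n-1}$, its discrete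 adjoint, a starting step $A_0Y_0=a\otimes y_0+h_0KF(Y_0)$ and an end step with matrix $A_N$ and output weight $w$. *)

theory Defs
  imports "Jordan_Normal_Form.Matrix"
begin

(* All matrix/vector indices are 0-based (Jordan_Normal_Form convention);
   the paper's index i corresponds to i-1 here. *)

text \<open>Inverse of a square n x n matrix (meaningful when the matrix is invertible).\<close>
definition mat_inv :: "nat \<Rightarrow> real mat \<Rightarrow> real mat" where
  "mat_inv n M = (SOME W. W \<in> carrier_mat n n \<and> M * W = 1\<^sub>m n \<and> W * M = 1\<^sub>m n)"

definition outer :: "real vec \<Rightarrow> real vec \<Rightarrow> real mat" where
  "outer u v = mat (dim_vec u) (dim_vec v) (\<lambda>(i,j). u $ i * v $ j)"

definition ones :: "nat \<Rightarrow> real vec" where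
  "ones k = vec k (\<lambda>_. 1)"

definition Vand :: "real vec \<Rightarrow> nat \<Rightarrow> real mat" where
  "Vand c r = mat (dim_vec c) r (\<lambda>(i,j). (c $ i) ^ j)"

text \<open>Pascal matrix P_r = (binom(j-1,i-1)) (1-based), i.e. binom(j,i) 0-based.\<close>
definition Pascal :: "nat \<Rightarrow> real mat" where
  "Pascal r = mat r r (\<lambda>(i,j). of_nat (j choose i))"

text \<open>Scaled shift matrix E~_r = (i delta_{i+1,j}) (1-based).\<close>
definition Etil :: "nat \<Rightarrow> real mat" where
  "Etil r = mat r r (\<lambda>(i,j). if j = i + 1 then of_nat (i + 1) else 0)"

definition Smat :: "nat \<Rightarrow> real \<Rightarrow> real mat" where
  "Smat r \<sigma> = mat r r (\<lambda>(i,j). if i = j then \<sigma> ^ i else 0)"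

definition Qmat :: "real vec \<Rightarrow> (real \<Rightarrow> real mat) \<Rightarrow> nat \<Rightarrow> nat \<Rightarrow> real \<Rightarrow> real mat" where
  "Qmat c B r r' \<sigma> = transpose_mat (Vand c r) * B \<sigma> * Vand c r' * mat_inv r' (Pascal r')"

end

theory Submission imports Defs "Jordan_Normal_Form.Determinant" "HOL-Computational_Algebra.Polynomial" begin

lemma inv_props:
  assumes M: "M \<in> carrier_mat n n" and d: "det M \<noteq> (0::real)"
  shows "mat_inv n M \<in> carrier_mat n n \<and> M * mat_inv n M = 1\<^sub>m n \<and> mat_inv n M * M = 1\<^sub>m n"
proof -
  from det_non_zero_imp_unit[OF M d, of "()"]
  obtain B where B: "B \<in> carrier_mat n n" "B * M = 1\<^sub>m n"
    unfolding Units_def ring_mat_def by auto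
  have "M * B = 1\<^sub>m n" using mat_mult_left_right_inverse[OF B(1) M B(2)] .
  hence "\<exists>W. W \<in> carrier_mat n n \<and> M * W = 1\<^sub>m n \<and> W * M = 1\<^sub>m n" using B by blast
  thus ?thesis unfolding mat_inv_def by (rule someI_ex)
qed

lemma det_Pascal: "det (Pascal n) \<noteq> 0"
proof -
  have "det (Pascal n) = prod_list (diag_mat (Pascal n))"
    by (rule det_upper_triangular) (auto simp: Pascal_def upper_triangular_def)
  also have "diag_mat (Pascal n) = replicate n 1"
    by (auto simp: diag_mat_def Pascal_def intro!: nth_equalityI)
  finally show ?thesis by simp
qed

lemma det_Vand:
  assumes c: "dim_vec c = s" and dist: "\<And>i j. i < s \<Longrightarrow> j < s \<Longrightarrow> i \<noteq> j \<Longrightarrow> c $ i \<noteq> c $ j"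
  shows "det (Vand c s) \<noteq> 0"
proof
  assume "det (Vand c s) = 0"
  then obtain v where v: "v \<in> carrier_vec s" "v \<noteq> 0\<^sub>v s" "Vand c s *\<^sub>v v = 0\<^sub>v s"
    using det_0_iff_vec_prod_zero_field[of "Vand c s" s] c by (auto simp: Vand_def)
  define p where "p = (\<Sum>i<s. monom (v $ i) i)"
  have roots: "poly p (c $ k) = 0" if k: "k < s" for k
  proof -
    have "(Vand c s *\<^sub>v v) $ k = 0" using v(3) k by simp
    hence "(\<Sum>i<s. (c $ k) ^ i * v $ i) = 0" using k c v(1)
      by (simp add: Vand_def scalar_prod_def row_def lessThan_atLeast0)
    thus ?thesis by (simp add: p_def poly_sum poly_monom mult.commute)
  qed
  have s0: "s > 0" using v(1,2) by (cases s) auto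
  have degp: "degree p < s"
  proof -
    have "degree p \<le> s - 1" unfolding p_def
      by (rule degree_sum_le) (auto intro: order.trans[OF degree_monom_le])
    thus ?thesis using s0 by linarith
  qed
  have inj: "inj_on (\<lambda>k. c $ k) {..<s}" using dist by (auto simp: inj_on_def)
  have card: "card ((\<lambda>k. c $ k) ` {..<s}) = s" using card_image[OF inj] by simp
  have "p = 0"
    by (rule poly_eqI_degree[of "(\<lambda>k. c $ k) ` {..<s}"]) (use roots card degp in auto)
  hence "v $ i = 0" if "i < s" for i
  proof -
    have "coeff p i = v $ i" using that unfolding p_def coeff_sum by (simp add: sum.delta)
    thus ?thesis using \<open>p = 0\<close> by simp
  qed
  hence "v = 0\<^sub>v s" using v(1) by (intro eq_vecI) auto
  with v(2) show False by simp
qed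

lemma cancel_add:
  assumes "X \<in> carrier_mat n m" "Y \<in> carrier_mat n m" "Z \<in> carrier_mat n m"
    and "X + Y = Z + (Y :: real mat)"
  shows "X = Z"
proof (rule eq_matI)
  fix i j assume ij: "i < dim_row Z" "j < dim_col Z"
  have "(X + Y) $$ (i,j) = (Z + Y) $$ (i,j)" using assms(4) by simp
  thus "X $$ (i,j) = Z $$ (i,j)" using ij assms(1-3) by simp
qed (use assms in auto)

lemma cancel_minus:
  assumes "X \<in> carrier_mat n m" "Y \<in> carrier_mat n m" "Z \<in> carrier_mat n m"
    and "X - Y = Z - (Y :: real mat)"
  shows "X = Z"
proof (rule eq_matI)
  fix i j assume ij: "i < dim_row Z" "j < dim_col Z"
  have "(X - Y) $$ (i,j) = (Z - Y) $$ (i,j)" using assms(4) by simp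
  thus "X $$ (i,j) = Z $$ (i,j)" using ij assms(1-3) by simp
qed (use assms in auto)

lemma conj_inv:
  assumes V: "V \<in> carrier_mat n n" and W: "W \<in> carrier_mat n n" and VW: "V * W = 1\<^sub>m n"
    and D: "D \<in> carrier_mat n n" and M: "transpose_mat V * D * V = (M :: real mat)"
  shows "D = transpose_mat W * M * W"
proof -
  have "transpose_mat W * M * W = transpose_mat W * (transpose_mat V * D * V) * W" using M by simp
  also have "\<dots> = (transpose_mat W * transpose_mat V) * D * (V * W)"
    using V W D by (simp add: assoc_mult_mat[of _ n n _ n _ n])
  also have "transpose_mat W * transpose_mat V = transpose_mat (V * W)"
    using transpose_mult[OF V W] by simp
  finally show ?thesis using VW D by simp
qed

lemma right_inv:
  assumes V: "V \<in> carrier_mat n n" and W: "W \<in> carrier_mat n n" and VW: "V * W = 1\<^sub>m n"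
    and D: "D \<in> carrier_mat m n" and N: "D * V = (N :: real mat)"
  shows "D = N * W"
proof -
  have "N * W = D * (V * W)" unfolding N[symmetric] using V W D by (simp add: assoc_mult_mat[of _ m n _ n _ n])
  thus ?thesis using VW D by simp
qed

theorem lemma1:
  fixes s q :: nat and c a w :: "real vec" and A K A0 AN :: "real mat"
    and B :: "real \<Rightarrow> real mat" and \<Sigma> :: "real set" and \<sigma>1 \<sigma>N :: real
  assumes s2: "s \<ge> 2" and q_def: "q = s - 1"
    and c_dim: "dim_vec c = s"
    and c_dist: "\<And>i j. i < s \<Longrightarrow> j < s \<Longrightarrow> i \<noteq> j \<Longrightarrow> c $ i \<noteq> c $ j"
    and A_car: "A \<in> carrier_mat s s" and K_car: "K \<in> carrier_mat s s"
    and B_car: "\<And>\<sigma>. \<sigma> \<in> \<Sigma> \<Longrightarrow> B \<sigma> \<in> carrier_mat s s"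
    and Sigma_pos: "\<Sigma> \<subseteq> {0<..}" and one_Sigma: "1 \<in> \<Sigma>"
    and order_fw: "\<And>\<sigma>. \<sigma> \<in> \<Sigma> \<Longrightarrow>
        A * Vand c q - K * Vand c q * Etil q
          = B \<sigma> * Vand c q * mat_inv q (Pascal q) * mat_inv q (Smat q \<sigma>)"
    and order_adj: "\<And>\<sigma>. \<sigma> \<in> \<Sigma> \<Longrightarrow>
        transpose_mat A * Vand c q + K * Vand c q * Etil q
          = transpose_mat (B \<sigma>) * Vand c q * Smat q \<sigma> * Pascal q"
    and Q1: "Qmat c B q q 1 = outer (unit_vec q 0) (unit_vec q 0)"
    and A0_car: "A0 \<in> carrier_mat s s" and AN_car: "AN \<in> carrier_mat s s"
    and a_car: "a \<in> carrier_vec s" and w_car: "w \<in> carrier_vec s"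
    and s1: "\<sigma>1 \<in> \<Sigma>" and sN: "\<sigma>N \<in> \<Sigma>"
    and start1: "A0 * Vand c q = outer a (unit_vec q 0) + K * Vand c q * Etil q"
    and start2: "transpose_mat A0 * Vand c q + K * Vand c q * Etil q
          = transpose_mat (B \<sigma>1) * Vand c q * Smat q \<sigma>1 * Pascal q"
    and end1: "AN * Vand c q - K * Vand c q * Etil q
          = B \<sigma>N * Vand c q * mat_inv q (Pascal q) * mat_inv q (Smat q \<sigma>N)"
    and end2: "transpose_mat AN * Vand c q + K * Vand c q * Etil q = outer w (ones q)"
  shows "a = A0 *\<^sub>v ones s \<and> w = transpose_mat AN *\<^sub>v ones s \<and>
    (\<exists>\<phi>0 \<phi>N. \<phi>0 \<in> carrier_vec s \<and> \<phi>N \<in> carrier_vec s \<and>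
      A0 = A + transpose_mat (mat_inv s (Vand c s)) * outer (unit_vec s (s - 1)) \<phi>0
                 * mat_inv s (Vand c s) \<and>
      AN = A + outer \<phi>N (unit_vec s (s - 1)) * mat_inv s (Vand c s) \<and>
      (\<forall>j. 1 \<le> j \<and> j < q \<longrightarrow>
         \<phi>0 $ j = - (Qmat c B s q 1 $$ (s - 1, j)) \<and>
         scalar_prod \<phi>N (col (Vand c q * mat_inv q (Pascal q)) j)
           = - ((transpose_mat (Vand c s) * B 1 * Vand c s) $$ (j, s - 1))))"
proof -
  define V where "V = Vand c q"
  define Vs where "Vs = Vand c s"
  define W where "W = mat_inv s Vs"
  define E where "E = Etil q"
  define P where "P = Pascal q"
  define Pi where "Pi = mat_inv q P"
  define B1 where "B1 = B 1"
  have q0: "0 < q" "q < s" "s - 1 = q" using s2 q_def by auto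
  have V: "V \<in> carrier_mat s q" using c_dim by (simp add: V_def Vand_def)
  have Vs: "Vs \<in> carrier_mat s s" using c_dim by (simp add: Vs_def Vand_def)
  have E: "E \<in> carrier_mat q q" by (simp add: E_def Etil_def)
  have P: "P \<in> carrier_mat q q" by (simp add: P_def Pascal_def)
  have B1: "B1 \<in> carrier_mat s s" using B_car[OF one_Sigma] by (simp add: B1_def)
  have Winv: "W \<in> carrier_mat s s \<and> Vs * W = 1\<^sub>m s \<and> W * Vs = 1\<^sub>m s"
    unfolding W_def by (rule inv_props[OF Vs]) (use det_Vand[OF c_dim c_dist] Vs_def in auto)
  have Piinv: "Pi \<in> carrier_mat q q \<and> P * Pi = 1\<^sub>m q \<and> Pi * P = 1\<^sub>m q"
    unfolding Pi_def by (rule inv_props[OF P]) (use det_Pascal P_def in auto)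
  have W: "W \<in> carrier_mat s s" and VsW: "Vs * W = 1\<^sub>m s" using Winv by auto
  have Pi: "Pi \<in> carrier_mat q q" and PPi: "P * Pi = 1\<^sub>m q" using Piinv by auto
  have S1: "Smat q 1 = 1\<^sub>m q" by (rule eq_matI) (auto simp: Smat_def)
  have Si1: "mat_inv q (Smat q 1) = 1\<^sub>m q"
  proof -
    have "mat_inv q (1\<^sub>m q) \<in> carrier_mat q q \<and> 1\<^sub>m q * mat_inv q (1\<^sub>m q) = 1\<^sub>m q \<and> mat_inv q (1\<^sub>m q) * 1\<^sub>m q = 1\<^sub>m q"
      by (rule inv_props) auto
    thus ?thesis unfolding S1 by auto
  qed
  have KVE: "K * V * E \<in> carrier_mat s q" using K_car V E by auto
  have fw1: "A * V - K * V * E = B1 * V * Pi"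
    using order_fw[OF one_Sigma] Si1 V B1 Pi by (simp add: V_def E_def B1_def Pi_def P_def)
  have adj1: "transpose_mat A * V + K * V * E = transpose_mat B1 * V * P"
    using order_adj[OF one_Sigma] S1 V B1 P by (simp add: V_def E_def B1_def P_def)
  have colV: "col V j = vec s (\<lambda>k. c $ k ^ j)" if "j < q" for j
    using that c_dim by (simp add: V_def Vand_def)
  have colVs: "col Vs j = vec s (\<lambda>k. c $ k ^ j)" if "j < s" for j
    using that c_dim by (simp add: Vs_def Vand_def)
  have colE0: "col E 0 = 0\<^sub>v q" using q0 by (intro eq_vecI) (auto simp: E_def Etil_def)
  have KVE0: "(K * V * E) $$ (i, 0) = 0" if "i < s" for i
  proof -
    have "(K * V * E) $$ (i, 0) = row (K * V) i \<bullet> col E 0"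
      by (rule index_mult_mat(1)) (use that q0 K_car V E in auto)
    also have "\<dots> = 0" unfolding colE0
      using scalar_prod_right_zero[OF row_carrier[of "K * V" i]] K_car V by simp
    finally show ?thesis .
  qed
  have ones_s: "ones s = col V 0" using colV q0 by (intro eq_vecI) (auto simp: ones_def)
  have part_a: "a = A0 *\<^sub>v ones s"
  proof (rule eq_vecI)
    fix i assume "i < dim_vec (A0 *\<^sub>v ones s)"
    hence i: "i < s" using A0_car by simp
    have e1: "A0 * V = outer a (unit_vec q 0) + K * V * E" using start1 by (simp only: V_def E_def)
    have "(A0 * V) $$ (i,0) = outer a (unit_vec q 0) $$ (i,0) + (K * V * E) $$ (i,0)"
      unfolding e1 by (rule index_add_mat(1)) (use i q0 KVE in auto)
    also have "\<dots> = a $ i" using i q0 KVE0[OF i] a_car by (simp add: outer_def)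
    finally have "a $ i = (A0 * V) $$ (i,0)" by simp
    also have "\<dots> = row A0 i \<bullet> col V 0" by (rule index_mult_mat(1)) (use i q0 A0_car V in auto)
    also have "\<dots> = (A0 *\<^sub>v ones s) $ i" unfolding ones_s by (rule index_mult_mat_vec[symmetric]) (use i A0_car in auto)
    finally show "a $ i = (A0 *\<^sub>v ones s) $ i" .
  qed (use a_car A0_car in auto)
  have part_w: "w = transpose_mat AN *\<^sub>v ones s"
  proof (rule eq_vecI)
    fix i assume "i < dim_vec (transpose_mat AN *\<^sub>v ones s)"
    hence i: "i < s" using AN_car by simp
    have e2: "transpose_mat AN * V + K * V * E = outer w (ones q)" using end2 by (simp only: V_def E_def)
    have "w $ i = outer w (ones q) $$ (i,0)" using i q0 w_car by (simp add: outer_def ones_def)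
    also have "\<dots> = (transpose_mat AN * V) $$ (i,0) + (K * V * E) $$ (i,0)"
      unfolding e2[symmetric] by (rule index_add_mat(1)) (use i q0 KVE in auto)
    also have "\<dots> = (transpose_mat AN * V) $$ (i,0)" using KVE0[OF i] by simp
    also have "\<dots> = row (transpose_mat AN) i \<bullet> col V 0" by (rule index_mult_mat(1)) (use i q0 AN_car V in auto)
    also have "\<dots> = (transpose_mat AN *\<^sub>v ones s) $ i" unfolding ones_s by (rule index_mult_mat_vec[symmetric]) (use i AN_car in auto)
    finally show "w $ i = (transpose_mat AN *\<^sub>v ones s) $ i" .
  qed (use w_car AN_car in auto)
  have T0: "transpose_mat A0 * V = transpose_mat A * V"
  proof -
    have "transpose_mat A0 * V + K * V * E = transpose_mat A * V + K * V * E"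
      using start2 order_adj[OF s1] by (simp only: V_def E_def)
    from cancel_add[OF _ KVE _ this] show ?thesis using A0_car A_car V by auto
  qed
  have TN: "AN * V = A * V"
  proof -
    have "AN * V - K * V * E = A * V - K * V * E"
      using end1 order_fw[OF sN] by (simp only: V_def E_def)
    from cancel_minus[OF _ KVE _ this] show ?thesis using AN_car A_car V by auto
  qed
  define D0 where "D0 = A0 - A"
  define DN where "DN = AN - A"
  have D0: "D0 \<in> carrier_mat s s" using A0_car A_car by (simp add: D0_def minus_carrier_mat)
  have DN: "DN \<in> carrier_mat s s" using AN_car A_car by (simp add: DN_def minus_carrier_mat)
  have tD0V: "transpose_mat D0 * V = 0\<^sub>m s q"
  proof -
    have "transpose_mat D0 * V = transpose_mat A0 * V - transpose_mat A * V"
      unfolding D0_def transpose_minus[OF A0_car A_car]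
      by (rule minus_mult_distrib_mat) (use A0_car A_car V in auto)
    also have "\<dots> = 0\<^sub>m s q" unfolding T0 by (intro eq_matI) (use A_car V in auto)
    finally show ?thesis .
  qed
  have DNV: "DN * V = 0\<^sub>m s q"
  proof -
    have "DN * V = AN * V - A * V"
      unfolding DN_def by (rule minus_mult_distrib_mat) (use AN_car A_car V in auto)
    also have "\<dots> = 0\<^sub>m s q" unfolding TN by (intro eq_matI) (use A_car V in auto)
    finally show ?thesis .
  qed
  have colVVs: "col V j = col Vs j" if "j < q" for j using colV colVs that q0 by simp
  define M0 where "M0 = transpose_mat Vs * D0 * Vs"
  have M0: "M0 \<in> carrier_mat s s" using Vs D0 by (simp add: M0_def)
  define \<phi>0 where "\<phi>0 = row M0 (s - 1)"
  have phi0: "\<phi>0 \<in> carrier_vec s" using M0 row_carrier[of M0 "s - 1"] by (simp add: \<phi>0_def)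
  have rowz: "(transpose_mat Vs * D0) $$ (i, l) = 0" if i: "i < q" and l: "l < s" for i l
  proof -
    have "(transpose_mat Vs * D0) $$ (i, l) = row (transpose_mat Vs) i \<bullet> col D0 l"
      by (rule index_mult_mat(1)) (use i l q0 Vs D0 in auto)
    also have "\<dots> = col V i \<bullet> col D0 l" using i q0 Vs colVVs[OF i] by simp
    also have "\<dots> = col D0 l \<bullet> col V i" by (rule comm_scalar_prod[of _ s]) (use i l V D0 in auto)
    also have "\<dots> = row (transpose_mat D0) l \<bullet> col V i" using l D0 by simp
    also have "\<dots> = (transpose_mat D0 * V) $$ (l, i)"
      by (rule index_mult_mat(1)[symmetric]) (use i l V D0 in auto)
    also have "\<dots> = 0" unfolding tD0V using i l by simp
    finally show ?thesis .
  qed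
  have M0eq: "M0 = outer (unit_vec s (s - 1)) \<phi>0"
  proof (rule eq_matI)
    fix i j assume ij: "i < dim_row (outer (unit_vec s (s - 1)) \<phi>0)" "j < dim_col (outer (unit_vec s (s - 1)) \<phi>0)"
    hence i: "i < s" and j: "j < s" using phi0 by (auto simp: outer_def)
    show "M0 $$ (i, j) = outer (unit_vec s (s - 1)) \<phi>0 $$ (i, j)"
    proof (cases "i = s - 1")
      case True
      thus ?thesis using i j M0 phi0 by (simp add: outer_def \<phi>0_def)
    next
      case False
      hence iq: "i < q" using i q0 by simp
      have "M0 $$ (i,j) = row (transpose_mat Vs * D0) i \<bullet> col Vs j"
        unfolding M0_def by (rule index_mult_mat(1)) (use i j Vs D0 in auto)
      also have "row (transpose_mat Vs * D0) i = 0\<^sub>v s"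
        by (rule eq_vecI) (use rowz[OF iq] i Vs D0 in auto)
      also have "0\<^sub>v s \<bullet> col Vs j = 0" using j Vs by simp
      finally show ?thesis using False i j phi0 by (simp add: outer_def)
    qed
  qed (use M0 phi0 in \<open>auto simp: outer_def\<close>)
  have A0eq: "A0 = A + transpose_mat W * outer (unit_vec s (s - 1)) \<phi>0 * W"
  proof -
    have "D0 = transpose_mat W * M0 * W"
      by (rule conj_inv[OF Vs W VsW D0]) (simp add: M0_def)
    hence "transpose_mat W * outer (unit_vec s (s - 1)) \<phi>0 * W = A0 - A" using M0eq D0_def by simp
    thus ?thesis using A0_car A_car by (auto intro!: eq_matI)
  qed
  have colD0V: "col (D0 * V) j = - col (B1 * V * Pi) j" if j1: "1 \<le> j" and jq: "j < q" for j
  proof (rule eq_vecI)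
    fix k assume "k < dim_vec (- col (B1 * V * Pi) j)"
    hence k: "k < s" using B1 V Pi by simp
    have e1: "A0 * V = outer a (unit_vec q 0) + K * V * E" using start1 by (simp only: V_def E_def)
    have "(A0 * V) $$ (k,j) = outer a (unit_vec q 0) $$ (k,j) + (K * V * E) $$ (k,j)"
      unfolding e1 by (rule index_add_mat(1)) (use k jq KVE in auto)
    also have "\<dots> = (K * V * E) $$ (k,j)" using k jq j1 a_car by (simp add: outer_def)
    finally have a0: "(A0 * V) $$ (k,j) = (K * V * E) $$ (k,j)" .
    have "(A * V - K * V * E) $$ (k,j) = (B1 * V * Pi) $$ (k,j)" using fw1 by simp
    moreover have "(A * V - K * V * E) $$ (k,j) = (A * V) $$ (k,j) - (K * V * E) $$ (k,j)"
      by (rule index_minus_mat(1)) (use k jq KVE in auto)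
    ultimately have a1: "(A * V) $$ (k,j) - (K * V * E) $$ (k,j) = (B1 * V * Pi) $$ (k,j)"
      by simp
    have "D0 * V = A0 * V - A * V"
      unfolding D0_def by (rule minus_mult_distrib_mat) (use A0_car A_car V in auto)
    hence "col (D0 * V) j $ k = (A0 * V) $$ (k,j) - (A * V) $$ (k,j)"
      using k jq A_car V by simp
    also have "\<dots> = - (B1 * V * Pi) $$ (k,j)" using a0 a1 by simp
    finally show "col (D0 * V) j $ k = (- col (B1 * V * Pi) j) $ k" using k jq B1 V Pi by simp
  qed (use D0 V B1 Pi in auto)
  have cond0: "\<phi>0 $ j = - (Qmat c B s q 1 $$ (s - 1, j))" if j1: "1 \<le> j" and jq: "j < q" for j
  proof -
    have js: "j < s" using jq q0 by simp
    have sl: "s - 1 < s" using q0 by simp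
    have "\<phi>0 $ j = M0 $$ (s - 1, j)" using js sl M0 by (simp add: \<phi>0_def)
    also have "M0 = transpose_mat Vs * (D0 * Vs)" unfolding M0_def using Vs D0 by simp
    also have "(transpose_mat Vs * (D0 * Vs)) $$ (s - 1, j) = row (transpose_mat Vs) (s - 1) \<bullet> col (D0 * Vs) j"
      by (rule index_mult_mat(1)) (use js sl Vs D0 in auto)
    also have "row (transpose_mat Vs) (s - 1) = col Vs (s - 1)" using sl Vs by simp
    also have "col (D0 * Vs) j = D0 *\<^sub>v col Vs j" by (rule col_mult2[OF D0 Vs js])
    also have "col Vs j = col V j" using colVVs[OF jq] by simp
    also have "D0 *\<^sub>v col V j = col (D0 * V) j" by (rule col_mult2[OF D0 V jq, symmetric])
    also have "\<dots> = - col (B1 * V * Pi) j" using colD0V[OF j1 jq] .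
    also have "col Vs (s - 1) \<bullet> - col (B1 * V * Pi) j = - (col Vs (s - 1) \<bullet> col (B1 * V * Pi) j)"
      using Vs B1 V Pi sl jq by simp
    also have "col Vs (s - 1) \<bullet> col (B1 * V * Pi) j = Qmat c B s q 1 $$ (s - 1, j)"
    proof -
      have "Qmat c B s q 1 = transpose_mat Vs * (B1 * V * Pi)"
        unfolding Qmat_def Vs_def[symmetric] V_def[symmetric] B1_def[symmetric] P_def[symmetric] Pi_def[symmetric]
        using Vs B1 V Pi by (simp add: assoc_mult_mat[of _ s s _ s _ q] assoc_mult_mat[of _ s s _ q _ q] assoc_mult_mat[of _ s q _ q _ q])
      hence "Qmat c B s q 1 $$ (s - 1, j) = row (transpose_mat Vs) (s - 1) \<bullet> col (B1 * V * Pi) j"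
        using sl jq Vs B1 V Pi by simp
      thus ?thesis using sl Vs by simp
    qed
    finally show ?thesis .
  qed
  have sl: "s - 1 < s" using q0 by simp
  define \<phi>N where "\<phi>N = col (DN * Vs) (s - 1)"
  have phiN: "\<phi>N \<in> carrier_vec s" using DN Vs sl by (simp add: \<phi>N_def)
  have DNVs: "DN * Vs = outer \<phi>N (unit_vec s (s - 1))"
  proof (rule eq_matI)
    fix i j assume ij: "i < dim_row (outer \<phi>N (unit_vec s (s - 1)))" "j < dim_col (outer \<phi>N (unit_vec s (s - 1)))"
    hence i: "i < s" and j: "j < s" using phiN by (auto simp: outer_def)
    show "(DN * Vs) $$ (i, j) = outer \<phi>N (unit_vec s (s - 1)) $$ (i, j)"
    proof (cases "j = s - 1")
      case True
      thus ?thesis using i j DN Vs phiN by (simp add: outer_def \<phi>N_def)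
    next
      case False
      hence jq: "j < q" using j q0 by simp
      have "(DN * Vs) $$ (i,j) = row DN i \<bullet> col Vs j"
        by (rule index_mult_mat(1)) (use i j Vs DN in auto)
      also have "\<dots> = row DN i \<bullet> col V j" using colVVs[OF jq] by simp
      also have "\<dots> = (DN * V) $$ (i,j)"
        by (rule index_mult_mat(1)[symmetric]) (use i jq V DN in auto)
      also have "\<dots> = 0" unfolding DNV using i jq by simp
      finally show ?thesis using False i j phiN by (simp add: outer_def)
    qed
  qed (use DN Vs phiN in \<open>auto simp: outer_def\<close>)
  have ANeq: "AN = A + outer \<phi>N (unit_vec s (s - 1)) * W"
  proof -
    have "DN = outer \<phi>N (unit_vec s (s - 1)) * W"
      by (rule right_inv[OF Vs W VsW DN DNVs])
    hence "outer \<phi>N (unit_vec s (s - 1)) * W = AN - A" using DN_def by simp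
    thus ?thesis using AN_car A_car by (auto intro!: eq_matI)
  qed
  have sumPi: "(\<Sum>m<q. Pi $$ (m, j)) = 0" if j1: "1 \<le> j" and jq: "j < q" for j
  proof -
    have "(P * Pi) $$ (0, j) = 0" using PPi j1 jq q0 by simp
    moreover have "(P * Pi) $$ (0, j) = row P 0 \<bullet> col Pi j"
      by (rule index_mult_mat(1)) (use q0 jq P Pi in auto)
    moreover have "row P 0 \<bullet> col Pi j = (\<Sum>m<q. Pi $$ (m, j))"
      using q0 jq Pi by (simp add: P_def Pascal_def scalar_prod_def lessThan_atLeast0)
    ultimately show ?thesis by simp
  qed
  have Yeq: "transpose_mat DN * V = outer w (ones q) - transpose_mat B1 * V * P"
  proof -
    have "transpose_mat DN * V = transpose_mat AN * V - transpose_mat A * V"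
      unfolding DN_def transpose_minus[OF AN_car A_car]
      by (rule minus_mult_distrib_mat) (use AN_car A_car V in auto)
    also have "\<dots> = outer w (ones q) - transpose_mat B1 * V * P"
    proof (rule eq_matI)
      fix i j assume ij: "i < dim_row (outer w (ones q) - transpose_mat B1 * V * P)"
        "j < dim_col (outer w (ones q) - transpose_mat B1 * V * P)"
      hence i: "i < s" and j: "j < q" using B1 V P by auto
      have e2: "transpose_mat AN * V + K * V * E = outer w (ones q)" using end2 by (simp only: V_def E_def)
      have x1: "(transpose_mat AN * V) $$ (i,j) + (K * V * E) $$ (i,j) = outer w (ones q) $$ (i,j)"
        unfolding e2[symmetric] by (rule index_add_mat(1)[symmetric]) (use i j KVE in auto)
      have x2: "(transpose_mat A * V) $$ (i,j) + (K * V * E) $$ (i,j) = (transpose_mat B1 * V * P) $$ (i,j)"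
        unfolding adj1[symmetric] by (rule index_add_mat(1)[symmetric]) (use i j KVE in auto)
      show "(transpose_mat AN * V - transpose_mat A * V) $$ (i, j) = (outer w (ones q) - transpose_mat B1 * V * P) $$ (i, j)"
        using x1 x2 i j A_car V B1 P by simp
    qed (use AN_car A_car V B1 P in auto)
    finally show ?thesis .
  qed
  have colX: "col (transpose_mat DN * V * Pi) j = - col (transpose_mat B1 * V) j" if j1: "1 \<le> j" and jq: "j < q" for j
  proof -
    have "transpose_mat DN * V * Pi = outer w (ones q) * Pi - transpose_mat B1 * V * P * Pi"
      unfolding Yeq by (rule minus_mult_distrib_mat) (use w_car B1 V P Pi in \<open>auto simp: outer_def ones_def\<close>)
    also have "transpose_mat B1 * V * P * Pi = transpose_mat B1 * V"
    proof -
      have "transpose_mat B1 * V * P * Pi = transpose_mat B1 * V * (P * Pi)"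
        by (rule assoc_mult_mat) (use B1 V P Pi in auto)
      thus ?thesis unfolding PPi using B1 V by simp
    qed
    finally have X: "transpose_mat DN * V * Pi = outer w (ones q) * Pi - transpose_mat B1 * V" .
    show ?thesis
    proof (rule eq_vecI)
      fix k assume "k < dim_vec (- col (transpose_mat B1 * V) j)"
      hence k: "k < s" using B1 V by simp
      have "(outer w (ones q) * Pi) $$ (k, j) = row (outer w (ones q)) k \<bullet> col Pi j"
        by (rule index_mult_mat(1)) (use k jq w_car Pi in \<open>auto simp: outer_def ones_def\<close>)
      also have "\<dots> = (\<Sum>m<q. w $ k * Pi $$ (m, j))"
        using k jq w_car Pi by (simp add: outer_def ones_def scalar_prod_def lessThan_atLeast0)
      also have "\<dots> = w $ k * (\<Sum>m<q. Pi $$ (m, j))" by (simp add: sum_distrib_left)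
      also have "\<dots> = 0" using sumPi[OF j1 jq] by simp
      finally have z: "(outer w (ones q) * Pi) $$ (k, j) = 0" .
      show "col (transpose_mat DN * V * Pi) j $ k = (- col (transpose_mat B1 * V) j) $ k"
        unfolding X using k jq z B1 V Pi by simp
    qed (use DN V Pi B1 in auto)
  qed
  have condN: "scalar_prod \<phi>N (col (Vand c q * mat_inv q (Pascal q)) j)
           = - ((transpose_mat (Vand c s) * B 1 * Vand c s) $$ (j, s - 1))" if j1: "1 \<le> j" and jq: "j < q" for j
  proof -
    have js: "j < s" using jq q0 by simp
    define u where "u = col Vs (s - 1)"
    define y where "y = col (V * Pi) j"
    have u: "u \<in> carrier_vec s" using Vs sl by (simp add: u_def)
    have y: "y \<in> carrier_vec s" using V Pi jq by (simp add: y_def)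
    have phiNu: "\<phi>N = DN *\<^sub>v u" unfolding \<phi>N_def u_def by (rule col_mult2[OF DN Vs sl])
    have "scalar_prod \<phi>N (col (Vand c q * mat_inv q (Pascal q)) j) = (DN *\<^sub>v u) \<bullet> y"
      by (simp add: phiNu y_def V_def Pi_def P_def)
    also have "\<dots> = y \<bullet> (DN *\<^sub>v u)" by (rule comm_scalar_prod[of _ s]) (use DN u y in auto)
    also have "\<dots> = (transpose_mat DN *\<^sub>v y) \<bullet> u" by (rule transpose_vec_mult_scalar[OF DN u y, symmetric])
    also have "transpose_mat DN *\<^sub>v y = col (transpose_mat DN * (V * Pi)) j"
      unfolding y_def by (rule col_mult2[symmetric]) (use DN V Pi jq in auto)
    also have "transpose_mat DN * (V * Pi) = transpose_mat DN * V * Pi"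
      using DN V Pi by (simp add: assoc_mult_mat[of _ s s _ q _ q])
    also have "col \<dots> j = - col (transpose_mat B1 * V) j" by (rule colX[OF j1 jq])
    also have "- col (transpose_mat B1 * V) j \<bullet> u = - (col (transpose_mat B1 * V) j \<bullet> u)"
      using B1 V u jq by simp
    also have "col (transpose_mat B1 * V) j = transpose_mat B1 *\<^sub>v col Vs j"
      unfolding colVVs[OF jq, symmetric] by (rule col_mult2) (use B1 V jq in auto)
    also have "(transpose_mat B1 *\<^sub>v col Vs j) \<bullet> u = col Vs j \<bullet> (B1 *\<^sub>v u)"
      by (rule transpose_vec_mult_scalar[OF B1 u]) (use Vs js in auto)
    also have "col Vs j \<bullet> (B1 *\<^sub>v u) = (transpose_mat (Vand c s) * B 1 * Vand c s) $$ (j, s - 1)"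
    proof -
      have "transpose_mat (Vand c s) * B 1 * Vand c s = transpose_mat Vs * (B1 * Vs)"
        unfolding Vs_def[symmetric] B1_def[symmetric] using Vs B1 by simp
      hence "(transpose_mat (Vand c s) * B 1 * Vand c s) $$ (j, s - 1) = row (transpose_mat Vs) j \<bullet> col (B1 * Vs) (s - 1)"
        using js sl Vs B1 by simp
      also have "col (B1 * Vs) (s - 1) = B1 *\<^sub>v u" unfolding u_def by (rule col_mult2[OF B1 Vs sl])
      finally show ?thesis using js Vs by simp
    qed
    finally show ?thesis .
  qed
  have A0eq': "A0 = A + transpose_mat (mat_inv s (Vand c s)) * outer (unit_vec s (s - 1)) \<phi>0
                 * mat_inv s (Vand c s)" using A0eq by (simp only: W_def Vs_def)
  have ANeq': "AN = A + outer \<phi>N (unit_vec s (s - 1)) * mat_inv s (Vand c s)"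
    using ANeq by (simp only: W_def Vs_def)
  have ALL: "\<forall>j. 1 \<le> j \<and> j < q \<longrightarrow>
         \<phi>0 $ j = - (Qmat c B s q 1 $$ (s - 1, j)) \<and>
         scalar_prod \<phi>N (col (Vand c q * mat_inv q (Pascal q)) j)
           = - ((transpose_mat (Vand c s) * B 1 * Vand c s) $$ (j, s - 1))"
  proof (intro allI impI)
    fix j assume h: "1 \<le> j \<and> j < q"
    show "\<phi>0 $ j = - (Qmat c B s q 1 $$ (s - 1, j)) \<and>
         scalar_prod \<phi>N (col (Vand c q * mat_inv q (Pascal q)) j)
           = - ((transpose_mat (Vand c s) * B 1 * Vand c s) $$ (j, s - 1))"
      using cond0[OF conjunct1[OF h] conjunct2[OF h]] condN[OF conjunct1[OF h] conjunct2[OF h]] by (rule conjI)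
  qed
  show ?thesis
    apply (rule conjI[OF part_a])
    apply (rule conjI[OF part_w])
    apply (rule exI[of _ \<phi>0])
    apply (rule exI[of _ \<phi>N])
    apply (rule conjI[OF phi0])
    apply (rule conjI[OF phiN])
    apply (rule conjI[OF A0eq'])
    apply (rule conjI[OF ANeq'])
    by (rule ALL)
qed

end
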